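(* Let $\mathcal H$ be a directed subfamily of $(\mathcal P(\omega_1),\subseteq^* )$. If $X\subseteq\omega_1$ is locally in the ideal generated by $\mathcal H\cup\mathrm{Fin}(\omega_1)$, then there is a finite $s\subseteq X$ such that $X\setminus s$ is locally in $\downarrow\mathcal H$.
   Context: $x\subseteq^*y$ means $x\setminus y$ is finite; directed means any two members have a $\subseteq^*$-upper bound in $\mathcal H$. $\mathrm{Fin}(\omega_1)$ is the set of finite subsets of $\omega_1$; the ideal generated by a family consists of all subsets of finite unions of its members. $\downarrow\mathcal H=\bigcup_{x\in\mathcal H}\mathcal P(x)$. A set is locally in a family $\mathcal K$ if all its countable subsets belong to $\mathcal K$. *)

theory Defs
  imports Main "HOL-Library.Countable_Set"
begin

text \<open>omega_1, realised as the field of the successor cardinal of natLeq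
  (the canonical well-order of the first uncountable cardinal in HOL's cardinal library).\<close>
definition omega1 :: "nat set set" where
  "omega1 = Field (cardSuc natLeq)"

definition almost_subset :: "'a set \<Rightarrow> 'a set \<Rightarrow> bool" (infix "\<subseteq>\<^sup>*" 50) where
  "x \<subseteq>\<^sup>* y \<longleftrightarrow> finite (x - y)"

definition directed_ae :: "'a set set \<Rightarrow> bool" where
  "directed_ae H \<longleftrightarrow> (\<forall>x\<in>H. \<forall>y\<in>H. \<exists>z\<in>H. x \<subseteq>\<^sup>* z \<and> y \<subseteq>\<^sup>* z)"

definition Fin :: "'a set \<Rightarrow> 'a set set" where
  "Fin U = {s. s \<subseteq> U \<and> finite s}"

definition ideal_gen :: "'a set \<Rightarrow> 'a set set \<Rightarrow> 'a set set" where
  "ideal_gen U F = {A. A \<subseteq> U \<and> (\<exists>G. finite G \<and> G \<subseteq> F \<and> A \<subseteq> \<Union>G)}"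

definition downset :: "'a set set \<Rightarrow> 'a set set" where
  "downset H = (\<Union>x\<in>H. Pow x)"

definition locally_in :: "'a set \<Rightarrow> 'a set set \<Rightarrow> bool" where
  "locally_in X K \<longleftrightarrow> (\<forall>Y. Y \<subseteq> X \<and> countable Y \<longrightarrow> Y \<in> K)"

end

theory Submission
  imports Defs
begin

lemma union_ae:
  assumes "H \<noteq> {}" "directed_ae H" "finite G" "G \<subseteq> H \<union> Fin U"
  shows "\<exists>h\<in>H. finite (\<Union>G - h)"
  using assms(3,4)
proof (induction G rule: finite_induct)
  case empty
  then show ?case using assms(1) by auto
next
  case (insert g G)
  then obtain h where h: "h \<in> H" "finite (\<Union>G - h)" by auto
  show ?case
  proof (cases "g \<in> H")
    case True
    then obtain z where z: "z \<in> H" "finite (h - z)" "finite (g - z)"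
      using assms(2) h(1) unfolding directed_ae_def almost_subset_def by blast
    have "\<Union>(insert g G) - z \<subseteq> (\<Union>G - h) \<union> (h - z) \<union> (g - z)" by blast
    then show ?thesis using z h by (meson finite_UnI finite_subset)
  next
    case False
    then have "finite g" using insert.prems unfolding Fin_def by auto
    have "\<Union>(insert g G) - h \<subseteq> (\<Union>G - h) \<union> g" by blast
    then show ?thesis using h \<open>finite g\<close> by (meson finite_UnI finite_subset)
  qed
qed

theorem lemma2p4:
  fixes H :: "nat set set set" and X :: "nat set set"
  assumes "H \<subseteq> Pow omega1" and "H \<noteq> {}" and "directed_ae H"
    and "X \<subseteq> omega1"
    and "locally_in X (ideal_gen omega1 (H \<union> Fin omega1))"
  shows "\<exists>s. finite s \<and> s \<subseteq> X \<and> locally_in (X - s) (downset H)"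
proof (rule ccontr)
  assume "\<not> ?thesis"
  then have "\<forall>s. \<exists>Y. finite s \<and> s \<subseteq> X \<longrightarrow> Y \<subseteq> X - s \<and> countable Y \<and> Y \<notin> downset H"
    unfolding locally_in_def by blast
  then obtain Y where Y: "\<And>s. finite s \<Longrightarrow> s \<subseteq> X \<Longrightarrow> Y s \<subseteq> X - s \<and> countable (Y s) \<and> Y s \<notin> downset H"
    by metis
  define f where "f W = W \<union> \<Union>(Y ` {s. finite s \<and> s \<subseteq> W})" for W
  define Z where "Z n = (f ^^ n) {}" for n
  have ZS: "Z (Suc n) = f (Z n)" for n unfolding Z_def by simp
  have ZX: "Z n \<subseteq> X \<and> countable (Z n)" for n
  proof (induction n)
    case 0 then show ?case unfolding Z_def by simp
  next
    case (Suc n)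
    have c: "countable {s. finite s \<and> s \<subseteq> Z n}"
      using Suc countable_Collect_finite_subset by blast
    have "\<Union>(Y ` {s. finite s \<and> s \<subseteq> Z n}) \<subseteq> X" using Y Suc by blast
    moreover have "countable (\<Union>(Y ` {s. finite s \<and> s \<subseteq> Z n}))"
      using c Y Suc by (intro countable_UN) auto
    ultimately show ?case using Suc unfolding ZS f_def by auto
  qed
  have mono: "Z n \<subseteq> Z m" if "n \<le> m" for n m
    using that
  proof (induction m)
    case 0 then show ?case by simp
  next
    case (Suc m)
    show ?case
    proof (cases "n = Suc m")
      case True then show ?thesis by simp
    next
      case False
      then have "Z n \<subseteq> Z m" using Suc by simp
      then show ?thesis unfolding ZS f_def by blast
    qed
  qed
  define ZZ where "ZZ = (\<Union>n. Z n)"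
  have "ZZ \<subseteq> X" "countable ZZ" using ZX unfolding ZZ_def by auto
  then have "ZZ \<in> ideal_gen omega1 (H \<union> Fin omega1)"
    using assms(5) unfolding locally_in_def by blast
  then obtain G where G: "finite G" "G \<subseteq> H \<union> Fin omega1" "ZZ \<subseteq> \<Union>G"
    unfolding ideal_gen_def by blast
  then obtain h where h: "h \<in> H" "finite (\<Union>G - h)"
    using union_ae[OF assms(2,3)] by blast
  define s where "s = ZZ - h"
  have fs: "finite s" unfolding s_def using h G(3) by (meson Diff_mono finite_subset order_refl)
  have fin_in: "finite t \<Longrightarrow> t \<subseteq> ZZ \<Longrightarrow> \<exists>n. t \<subseteq> Z n" for t
  proof (induction t rule: finite_induct)
    case empty then show ?case by simp
  next
    case (insert x t)
    then obtain n where n: "t \<subseteq> Z n" by auto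
    obtain m where m: "x \<in> Z m" using insert.prems unfolding ZZ_def by auto
    have "t \<subseteq> Z (max n m)" "x \<in> Z (max n m)" using n m mono[of n "max n m"] mono[of m "max n m"] by auto
    then show ?case by blast
  qed
  obtain n where n: "s \<subseteq> Z n" using fin_in[OF fs] unfolding s_def by blast
  have sX: "s \<subseteq> X" using \<open>ZZ \<subseteq> X\<close> unfolding s_def by blast
  have "Y s \<subseteq> Z (Suc n)" unfolding ZS f_def using n fs by blast
  then have "Y s \<subseteq> ZZ" unfolding ZZ_def by blast
  moreover have "Y s \<inter> s = {}" using Y[OF fs sX] by blast
  ultimately have "Y s \<subseteq> h" unfolding s_def by blast
  then have "Y s \<in> downset H" using h(1) unfolding downset_def by blast
  then show False using Y[OF fs sX] by blast
qed

end
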